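(* Let $k\ge1$, let $N$ be a power of $2$, let $A \geq 2$, and let $f_0,\dots,f_k:[N]\to\mathbb{C}$ be bounded in magnitude by $1$, extended by zero outside $[N]$. Then $$ \sum_{n:\, N/A \le 2^n \le N}\ \sum_{j=0}^{N/2^n-1} 2^{-n}\Big| \sum_{x,t\in\mathbb{Z}} f_0(x)f_1(x+t)\cdots f_k(x+kt)\,\psi(t/2^n)\,\varphi(2^{-n}x-j)\Big| \leq C\, N^{1/2}(\log A) \inf_{0\le i\le k}\|f_i\|_{\ell^2([N])},$$ with $C$ depending only on $k,\psi,\varphi$.
   Context: $[N] := \{1,\dots,N\}$; $n$ ranges over nonnegative integers. Fix a smooth odd function $\psi:\mathbb{R}\to\mathbb{R}$ supported on $[-2,-1/2]\cup[1/2,2]$ with $\sum_{n\in\mathbb{Z}} 2^{-n}\psi(2^{-n}t) = \frac1t$ for $t \neq 0$, and a smooth $\varphi:\mathbb{R}\to\mathbb{R}$ supported on $[-1,1]$ with $\sum_{j \in \mathbb{Z}} \varphi(x-j) = 1$ for all $x \in \mathbb{R}$. *)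

theory Defs
  imports "HOL-Analysis.Analysis"
begin

definition smooth_fun :: "(real \<Rightarrow> real) \<Rightarrow> bool" where
  "smooth_fun g \<longleftrightarrow> (\<forall>m::nat. \<forall>x. ((deriv ^^ m) g) differentiable (at x))"

definition admissible_psi :: "(real \<Rightarrow> real) \<Rightarrow> bool" where
  "admissible_psi \<psi> \<longleftrightarrow> smooth_fun \<psi>
     \<and> (\<forall>t. \<psi> (-t) = - \<psi> t)
     \<and> (\<forall>t. \<psi> t \<noteq> 0 \<longrightarrow> t \<in> {-2..-1/2} \<union> {1/2..2})
     \<and> (\<forall>t. t \<noteq> 0 \<longrightarrow>
          ((\<lambda>n::int. 2 powr (- real_of_int n) * \<psi> (2 powr (- real_of_int n) * t)) has_sum (1 / t)) UNIV)"

definition admissible_phi :: "(real \<Rightarrow> real) \<Rightarrow> bool" where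
  "admissible_phi \<phi> \<longleftrightarrow> smooth_fun \<phi>
     \<and> (\<forall>x. \<phi> x \<noteq> 0 \<longrightarrow> x \<in> {-1..1})
     \<and> (\<forall>x. ((\<lambda>j::int. \<phi> (x - real_of_int j)) has_sum 1) UNIV)"

definition ext0 :: "nat \<Rightarrow> (int \<Rightarrow> complex) \<Rightarrow> int \<Rightarrow> complex" where
  "ext0 N g x = (if 1 \<le> x \<and> x \<le> int N then g x else 0)"

definition l2norm_N :: "nat \<Rightarrow> (int \<Rightarrow> complex) \<Rightarrow> real" where
  "l2norm_N N g = sqrt (\<Sum>x\<in>{1..int N}. (cmod (g x))^2)"

end

theory Submission
  imports Defs
begin

lemma smooth_bounded:
  assumes "smooth_fun g" and supp: "\<And>x. g x \<noteq> 0 \<Longrightarrow> \<bar>x\<bar> \<le> 2"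
  shows "\<exists>M\<ge>0. \<forall>x. \<bar>g x\<bar> \<le> M"
proof -
  have "\<And>x. g differentiable (at x)"
    using assms(1) unfolding smooth_fun_def by (metis funpow_0)
  hence "continuous_on (cball 0 2) g"
    by (meson continuous_at_imp_continuous_on differentiable_imp_continuous_within)
  hence "compact (g ` cball 0 2)" by (rule compact_continuous_image) simp
  then obtain B where B: "\<And>y. y \<in> g ` cball 0 2 \<Longrightarrow> norm y \<le> B"
    using compact_imp_bounded bounded_iff by metis
  show ?thesis
  proof (intro exI[of _ "max B 0"] conjI allI)
    fix x
    show "\<bar>g x\<bar> \<le> max B 0"
    proof (cases "g x = 0")
      case False
      hence "x \<in> cball 0 2" using supp by auto
      thus ?thesis using B[of "g x"] by auto
    qed simp
  qed simp
qed

lemma ext0_le1: "(\<forall>x\<in>{1..int N}. cmod (g x) \<le> 1) \<Longrightarrow> cmod (ext0 N g y) \<le> 1"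
  by (auto simp: ext0_def)

lemma shift_sum:
  fixes h :: "int \<Rightarrow> real"
  assumes "\<And>y. h y \<ge> 0" "\<And>y. y \<notin> {1..int N} \<Longrightarrow> h y = 0"
  shows "(\<Sum>x\<in>{1..int N}. h (x + c)) \<le> (\<Sum>y\<in>{1..int N}. h y)"
proof -
  have "(\<Sum>x\<in>{1..int N}. h (x + c)) = (\<Sum>y\<in>(\<lambda>x. x + c) ` {1..int N}. h y)"
    by (subst sum.reindex) (auto simp: inj_on_def)
  also have "\<dots> \<le> (\<Sum>y\<in>(\<lambda>x. x + c) ` {1..int N} \<union> {1..int N}. h y)"
    by (rule sum_mono2) (auto simp: assms)
  also have "\<dots> = (\<Sum>y\<in>{1..int N}. h y)"
    by (rule sum.mono_neutral_right) (auto simp: assms)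
  finally show ?thesis .
qed

lemma cs_bound:
  fixes g :: "int \<Rightarrow> complex"
  shows "(\<Sum>y\<in>{1..int N}. cmod (g y)) \<le> sqrt (real N) * l2norm_N N g"
proof -
  have "(\<Sum>y\<in>{1..int N}. \<bar>cmod (g y)\<bar> * \<bar>1\<bar>) \<le> L2_set (\<lambda>y. cmod (g y)) {1..int N} * L2_set (\<lambda>_. 1) {1..int N}"
    by (rule L2_set_mult_ineq)
  moreover have "L2_set (\<lambda>_. 1::real) {1..int N} = sqrt (real N)"
    by (simp add: L2_set_def)
  moreover have "L2_set (\<lambda>y. cmod (g y)) {1..int N} = l2norm_N N g"
    by (simp add: L2_set_def l2norm_N_def)
  ultimately show ?thesis by (simp add: mult.commute)
qed

lemma phi_count:
  fixes \<phi> :: "real \<Rightarrow> real"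
  assumes M: "\<And>x. \<bar>\<phi> x\<bar> \<le> M" and supp: "\<And>x. \<phi> x \<noteq> 0 \<Longrightarrow> \<bar>x\<bar> \<le> 1"
  shows "(\<Sum>j\<in>{0..<K::nat}. \<bar>\<phi> (y - real j)\<bar>) \<le> 3 * M"
proof -
  define c where "c = nat \<lceil>y - 1\<rceil>"
  let ?S = "{j\<in>{0..<K}. \<bar>y - real j\<bar> \<le> 1}"
  have "(\<Sum>j\<in>{0..<K::nat}. \<bar>\<phi> (y - real j)\<bar>) = (\<Sum>j\<in>?S. \<bar>\<phi> (y - real j)\<bar>)"
    by (rule sum.mono_neutral_right) (auto dest: supp)
  also have "\<dots> \<le> (\<Sum>j\<in>?S. M)" by (rule sum_mono) (rule M)
  also have "\<dots> = card ?S * M" by simp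
  also have "card ?S \<le> card {c..<c+3}"
  proof (rule card_mono)
    show "?S \<subseteq> {c..<c+3}"
    proof
      fix j assume j: "j \<in> ?S"
      hence "y - 1 \<le> real j" "real j \<le> y + 1" by auto
      have yc: "y \<le> real_of_int \<lceil>y\<rceil>" by (rule le_of_int_ceiling)
      have "\<lceil>y - 1\<rceil> \<le> int j" using j by (simp only: ceiling_le_iff) auto
      moreover have "real j < real_of_int \<lceil>y - 1\<rceil> + 3" using j yc by (simp add: abs_le_iff) linarith
      ultimately show "j \<in> {c..<c+3}" unfolding c_def by auto
    qed
  qed simp
  hence "real (card ?S) * M \<le> 3 * M"
    using M[of 0] by (intro mult_right_mono) auto
  finally show ?thesis by simp
qed

lemma psi_sum:
  fixes \<psi> :: "real \<Rightarrow> real"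
  assumes M: "\<And>x. \<bar>\<psi> x\<bar> \<le> M" and supp: "\<And>x. \<psi> x \<noteq> 0 \<Longrightarrow> \<bar>x\<bar> \<le> 2"
  shows "(\<Sum>t\<in>{- int N..int N}. \<bar>\<psi> (real_of_int t / 2 ^ n)\<bar>) \<le> 5 * 2 ^ n * M"
proof -
  let ?B = "{- (2 ^ (n+1))..(2::int) ^ (n+1)}"
  let ?g = "\<lambda>t. \<bar>\<psi> (real_of_int t / 2 ^ n)\<bar>"
  have z: "?g t = 0" if "t \<notin> ?B" for t
  proof (rule ccontr)
    assume "?g t \<noteq> 0"
    hence "\<bar>real_of_int t / 2 ^ n\<bar> \<le> 2" using supp by (metis abs_zero)
    hence "\<bar>real_of_int t\<bar> \<le> 2 * 2 ^ n" by (simp add: divide_le_eq abs_divide)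
    hence "real_of_int \<bar>t\<bar> \<le> real_of_int (2 ^ (n+1))" by simp
    hence "\<bar>t\<bar> \<le> 2 ^ (n+1)" by (simp only: of_int_le_iff)
    thus False using that by (simp add: abs_le_iff)
  qed
  have "(\<Sum>t\<in>{- int N..int N}. ?g t) = (\<Sum>t\<in>{- int N..int N} \<inter> ?B. ?g t)"
    by (rule sum.mono_neutral_right) (use z in blast)+
  also have "\<dots> \<le> (\<Sum>t\<in>?B. ?g t)" by (rule sum_mono2) auto
  also have "\<dots> \<le> (\<Sum>t\<in>?B. M)" by (rule sum_mono) (rule M)
  also have "\<dots> = (2 ^ (n+2) + 1) * M" by (simp add: algebra_simps)
  also have "\<dots> \<le> 5 * 2 ^ n * M"
    using M[of 0] by (intro mult_right_mono) auto
  finally show ?thesis .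
qed

lemma prod_bound:
  fixes f :: "nat \<Rightarrow> int \<Rightarrow> complex"
  assumes bd: "\<forall>i\<le>k. \<forall>x\<in>{1..int N}. cmod (f i x) \<le> 1" and m: "m \<le> k"
  shows "cmod (ext0 N (f 0) x * (\<Prod>i\<in>{1..k}. ext0 N (f i) (x + int i * t)))
         \<le> cmod (ext0 N (f m) (x + int m * t))"
proof -
  have le1: "cmod (ext0 N (f i) y) \<le> 1" if "i \<le> k" for i y
    using bd that by (intro ext0_le1) auto
  have p1: "(\<Prod>i\<in>B. cmod (ext0 N (f i) (x + int i * t))) \<le> 1" if "B \<subseteq> {1..k}" for B
  proof (rule prod_le_1)
    fix i assume "i \<in> B"
    hence "i \<le> k" using that by auto
    thus "0 \<le> cmod (ext0 N (f i) (x + int i * t)) \<and> cmod (ext0 N (f i) (x + int i * t)) \<le> 1"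
      using le1 by auto
  qed
  show ?thesis
  proof (cases "m = 0")
    case True
    have "cmod (ext0 N (f 0) x * (\<Prod>i\<in>{1..k}. ext0 N (f i) (x + int i * t)))
        = cmod (ext0 N (f 0) x) * (\<Prod>i\<in>{1..k}. cmod (ext0 N (f i) (x + int i * t)))"
      by (simp add: norm_mult prod_norm)
    also have "\<dots> \<le> cmod (ext0 N (f 0) x) * 1"
      by (intro mult_left_mono p1) auto
    finally show ?thesis using True by simp
  next
    case False
    hence mk: "m \<in> {1..k}" using m by auto
    have "cmod (ext0 N (f 0) x * (\<Prod>i\<in>{1..k}. ext0 N (f i) (x + int i * t)))
        = cmod (ext0 N (f 0) x) * (cmod (ext0 N (f m) (x + int m * t)) *
            (\<Prod>i\<in>{1..k}-{m}. cmod (ext0 N (f i) (x + int i * t))))"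
      using prod.remove[OF _ mk, of "\<lambda>i. cmod (ext0 N (f i) (x + int i * t))"]
      by (simp only: norm_mult prod_norm) simp
    also have "\<dots> \<le> 1 * (cmod (ext0 N (f m) (x + int m * t)) * 1)"
      by (intro mult_mono le1 p1 mult_nonneg_nonneg prod_nonneg) auto
    finally show ?thesis by simp
  qed
qed

lemma per_n:
  fixes \<psi> \<phi> :: "real \<Rightarrow> real" and f :: "nat \<Rightarrow> int \<Rightarrow> complex"
  assumes Mp: "\<And>x. \<bar>\<psi> x\<bar> \<le> Mp" and sp: "\<And>x. \<psi> x \<noteq> 0 \<Longrightarrow> \<bar>x\<bar> \<le> 2"
    and Mf: "\<And>x. \<bar>\<phi> x\<bar> \<le> Mf" and sf: "\<And>x. \<phi> x \<noteq> 0 \<Longrightarrow> \<bar>x\<bar> \<le> 1"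
    and bd: "\<forall>i\<le>k. \<forall>x\<in>{1..int N}. cmod (f i x) \<le> 1" and m: "m \<le> k"
  shows "(\<Sum>j\<in>{0..<N div 2 ^ n}.
          2 powr (- real n) *
          cmod (\<Sum>x\<in>{1..int N}. \<Sum>t\<in>{- int N..int N}.
              ext0 N (f 0) x * (\<Prod>i\<in>{1..k}. ext0 N (f i) (x + int i * t))
              * complex_of_real (\<psi> (real_of_int t / 2 ^ n))
              * complex_of_real (\<phi> (2 powr (- real n) * real_of_int x - real j))))
     \<le> 15 * Mp * Mf * sqrt (real N) * l2norm_N N (f m)"
proof -
  define h where "h y = cmod (ext0 N (f m) y)" for y
  define P where "P x t = ext0 N (f 0) x * (\<Prod>i\<in>{1..k}. ext0 N (f i) (x + int i * t))" for x t
  define H where "H x t = h (x + int m * t) * \<bar>\<psi> (real_of_int t / 2 ^ n)\<bar>" for x t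
  define F where "F x j = \<bar>\<phi> (2 powr (- real n) * real_of_int x - real j)\<bar>" for x and j :: nat
  let ?X = "{1..int N}" and ?T = "{- int N..int N}" and ?J = "{0..<N div 2 ^ n}"
  define L where "L = l2norm_N N (f m)"
  have Hnn: "H x t \<ge> 0" for x t by (simp add: H_def h_def)
  have Mf0: "Mf \<ge> 0" using Mf[of 0] by simp
  have Mp0: "Mp \<ge> 0" using Mp[of 0] by simp
  have s2: "cmod (\<Sum>x\<in>?X. \<Sum>t\<in>?T. P x t * complex_of_real (\<psi> (real_of_int t / 2 ^ n))
              * complex_of_real (\<phi> (2 powr (- real n) * real_of_int x - real j)))
          \<le> (\<Sum>x\<in>?X. \<Sum>t\<in>?T. H x t * F x j)" for j
  proof -
    have "cmod (\<Sum>x\<in>?X. \<Sum>t\<in>?T. P x t * complex_of_real (\<psi> (real_of_int t / 2 ^ n))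
              * complex_of_real (\<phi> (2 powr (- real n) * real_of_int x - real j)))
        \<le> (\<Sum>x\<in>?X. cmod (\<Sum>t\<in>?T. P x t * complex_of_real (\<psi> (real_of_int t / 2 ^ n))
              * complex_of_real (\<phi> (2 powr (- real n) * real_of_int x - real j))))"
      by (rule norm_sum)
    also have "\<dots> \<le> (\<Sum>x\<in>?X. \<Sum>t\<in>?T. cmod (P x t * complex_of_real (\<psi> (real_of_int t / 2 ^ n))
              * complex_of_real (\<phi> (2 powr (- real n) * real_of_int x - real j))))"
      by (intro sum_mono norm_sum)
    also have "\<dots> \<le> (\<Sum>x\<in>?X. \<Sum>t\<in>?T. H x t * F x j)"
    proof (intro sum_mono)
      fix x t
      have "cmod (P x t) \<le> h (x + int m * t)"
        unfolding P_def h_def by (rule prod_bound[OF bd m])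
      thus "cmod (P x t * complex_of_real (\<psi> (real_of_int t / 2 ^ n))
              * complex_of_real (\<phi> (2 powr (- real n) * real_of_int x - real j))) \<le> H x t * F x j"
        unfolding H_def F_def by (simp add: norm_mult mult_right_mono)
    qed
    finally show ?thesis .
  qed
  have "(\<Sum>j\<in>?J. 2 powr (- real n) *
          cmod (\<Sum>x\<in>?X. \<Sum>t\<in>?T. P x t * complex_of_real (\<psi> (real_of_int t / 2 ^ n))
              * complex_of_real (\<phi> (2 powr (- real n) * real_of_int x - real j))))
     \<le> (\<Sum>j\<in>?J. 2 powr (- real n) * (\<Sum>x\<in>?X. \<Sum>t\<in>?T. H x t * F x j))"
    by (intro sum_mono mult_left_mono s2) auto
  also have "\<dots> = 2 powr (- real n) * (\<Sum>x\<in>?X. \<Sum>t\<in>?T. H x t * (\<Sum>j\<in>?J. F x j))"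
    by (simp add: sum_distrib_left sum.swap[of _ ?J])
  also have "\<dots> \<le> 2 powr (- real n) * (\<Sum>x\<in>?X. \<Sum>t\<in>?T. H x t * (3 * Mf))"
    unfolding F_def
    by (intro mult_left_mono sum_mono mult_left_mono phi_count[OF Mf sf] Hnn) auto
  also have "\<dots> = 2 powr (- real n) * (3 * Mf) * (\<Sum>t\<in>?T. \<bar>\<psi> (real_of_int t / 2 ^ n)\<bar> * (\<Sum>x\<in>?X. h (x + int m * t)))"
    unfolding H_def by (simp add: sum_distrib_left sum_distrib_right sum.swap[of _ ?X] mult_ac)
  also have "\<dots> \<le> 2 powr (- real n) * (3 * Mf) * (\<Sum>t\<in>?T. \<bar>\<psi> (real_of_int t / 2 ^ n)\<bar> * (sqrt (real N) * L))"
  proof (rule mult_left_mono, rule sum_mono)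
    fix t
    have "(\<Sum>x\<in>?X. h (x + int m * t)) \<le> (\<Sum>y\<in>?X. h y)"
      by (rule shift_sum) (auto simp: h_def ext0_def)
    also have "\<dots> \<le> sqrt (real N) * l2norm_N N (ext0 N (f m))"
      unfolding h_def by (rule cs_bound)
    also have "l2norm_N N (ext0 N (f m)) = L"
      unfolding L_def l2norm_N_def by (intro arg_cong[where f=sqrt] sum.cong) (auto simp: ext0_def)
    finally show "\<bar>\<psi> (real_of_int t / 2 ^ n)\<bar> * (\<Sum>x\<in>?X. h (x + int m * t))
        \<le> \<bar>\<psi> (real_of_int t / 2 ^ n)\<bar> * (sqrt (real N) * L)"
      by (intro mult_left_mono) auto
  qed (use Mf0 in auto)
  also have "\<dots> = 2 powr (- real n) * (3 * Mf) * (sqrt (real N) * L) * (\<Sum>t\<in>?T. \<bar>\<psi> (real_of_int t / 2 ^ n)\<bar>)"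
    by (simp add: sum_distrib_left mult_ac)
  also have "\<dots> \<le> 2 powr (- real n) * (3 * Mf) * (sqrt (real N) * L) * (5 * 2 ^ n * Mp)"
    by (intro mult_left_mono psi_sum[OF Mp sp]) (use Mf0 in \<open>auto simp: L_def l2norm_N_def intro!: mult_nonneg_nonneg sum_nonneg\<close>)
  also have "\<dots> = (2 powr (- real n) * 2 ^ n) * (15 * Mp * Mf * sqrt (real N) * L)"
    by (simp add: mult_ac)
  also have "2 powr (- real n) * 2 ^ n = 1"
    by (simp add: powr_minus powr_realpow divide_simps)
  finally show ?thesis unfolding P_def L_def by simp
qed

lemma card_S:
  fixes A :: real
  assumes N: "N = 2 ^ M" and A: "A \<ge> 2"
  shows "finite {n::nat. real N / A \<le> 2 ^ n \<and> 2 ^ n \<le> N}"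
    "real (card {n::nat. real N / A \<le> 2 ^ n \<and> 2 ^ n \<le> N}) \<le> 2 * ln A / ln 2"
proof -
  let ?S = "{n::nat. real N / A \<le> 2 ^ n \<and> 2 ^ n \<le> N}"
  have nM: "n \<le> M" if "n \<in> ?S" for n
  proof -
    have "(2::nat) ^ n \<le> 2 ^ M" using that N by simp
    thus ?thesis by (simp add: power_increasing_iff)
  qed
  show fin: "finite ?S" by (rule finite_subset[of _ "{..M}"]) (use nM in auto)
  let ?D = "nat \<lfloor>log 2 A\<rfloor>"
  have img: "(\<lambda>n. M - n) ` ?S \<subseteq> {..?D}"
  proof
    fix d assume "d \<in> (\<lambda>n. M - n) ` ?S"
    then obtain n where n: "n \<in> ?S" "d = M - n" by auto
    have "n \<le> M" using nM n by auto
    have "real N / A \<le> 2 ^ n" using n by auto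
    hence "2 ^ M \<le> A * 2 ^ n" using A N by (simp add: divide_le_eq mult.commute)
    moreover have "(2::real) ^ M = 2 ^ (M - n) * 2 ^ n"
      using \<open>n \<le> M\<close> by (simp add: power_add[symmetric])
    ultimately have "2 ^ d \<le> A" using n by simp
    hence "2 powr real d \<le> A" by (simp add: powr_realpow)
    hence "real d \<le> log 2 A" using A by (simp add: le_log_iff)
    hence "int d \<le> \<lfloor>log 2 A\<rfloor>" by linarith
    thus "d \<in> {..?D}" by auto
  qed
  have "inj_on (\<lambda>n. M - n) ?S"
  proof (rule inj_onI)
    fix x y assume "x \<in> ?S" "y \<in> ?S" "M - x = M - y"
    thus "x = y" using nM[of x] nM[of y] by linarith
  qed
  hence "card ?S = card ((\<lambda>n. M - n) ` ?S)" by (simp add: card_image)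
  also have "\<dots> \<le> card {..?D}" by (rule card_mono) (use img in auto)
  finally have c: "real (card ?S) \<le> real ?D + 1" by simp
  have l1: "log 2 A \<ge> 1" using A by (simp add: le_log_iff)
  have "real ?D \<le> log 2 A" using l1 by linarith
  hence "real (card ?S) \<le> 2 * log 2 A" using c l1 by linarith
  thus "real (card ?S) \<le> 2 * ln A / ln 2" by (simp add: log_def)
qed

theorem lemma3p2:
  fixes \<psi> \<phi> :: "real \<Rightarrow> real" and k :: nat
  assumes "admissible_psi \<psi>" and "admissible_phi \<phi>" and "k \<ge> 1"
  shows "\<exists>C::real. \<forall>(N::nat) (A::real) (f::nat \<Rightarrow> int \<Rightarrow> complex).
     (\<exists>m::nat. N = 2 ^ m) \<longrightarrow> A \<ge> 2 \<longrightarrow>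
     (\<forall>i\<le>k. \<forall>x\<in>{1..int N}. cmod (f i x) \<le> 1) \<longrightarrow>
     (\<Sum>n\<in>{n::nat. real N / A \<le> 2 ^ n \<and> 2 ^ n \<le> N}.
        \<Sum>j\<in>{0..<N div 2 ^ n}.
          2 powr (- real n) *
          cmod (\<Sum>x\<in>{1..int N}. \<Sum>t\<in>{- int N..int N}.
              ext0 N (f 0) x * (\<Prod>i\<in>{1..k}. ext0 N (f i) (x + int i * t))
              * complex_of_real (\<psi> (real_of_int t / 2 ^ n))
              * complex_of_real (\<phi> (2 powr (- real n) * real_of_int x - real j))))
     \<le> C * sqrt (real N) * ln A * Min ((\<lambda>i. l2norm_N N (f i)) ` {0..k})"
proof -
  have sp: "\<And>x. \<psi> x \<noteq> 0 \<Longrightarrow> \<bar>x\<bar> \<le> 2" using assms(1) unfolding admissible_psi_def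
    by fastforce
  have sf: "\<And>x. \<phi> x \<noteq> 0 \<Longrightarrow> \<bar>x\<bar> \<le> 1" using assms(2) unfolding admissible_phi_def
    by fastforce
  obtain Mp where Mp0: "Mp \<ge> 0" and Mp: "\<And>x. \<bar>\<psi> x\<bar> \<le> Mp"
    using smooth_bounded[of \<psi>] assms(1) sp unfolding admissible_psi_def by blast
  obtain Mf where Mf0: "Mf \<ge> 0" and Mf: "\<And>x. \<bar>\<phi> x\<bar> \<le> Mf"
    using smooth_bounded[of \<phi>] assms(2) sf unfolding admissible_phi_def by fastforce
  show ?thesis
  proof (intro exI[of _ "2 / ln 2 * (15 * Mp * Mf)"] allI impI)
    fix N :: nat and A :: real and f :: "nat \<Rightarrow> int \<Rightarrow> complex"
    assume "\<exists>m::nat. N = 2 ^ m" and A: "A \<ge> 2" and bd: "\<forall>i\<le>k. \<forall>x\<in>{1..int N}. cmod (f i x) \<le> 1"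
    then obtain M where N: "N = 2 ^ M" by blast
    let ?S = "{n::nat. real N / A \<le> 2 ^ n \<and> 2 ^ n \<le> N}"
    have "Min ((\<lambda>i. l2norm_N N (f i)) ` {0..k}) \<in> (\<lambda>i. l2norm_N N (f i)) ` {0..k}"
      by (rule Min_in) auto
    then obtain m where "m \<in> {0..k}" "Min ((\<lambda>i. l2norm_N N (f i)) ` {0..k}) = l2norm_N N (f m)"
      by (metis (no_types, lifting) imageE)
    then obtain m where m: "m \<le> k" and mL: "Min ((\<lambda>i. l2norm_N N (f i)) ` {0..k}) = l2norm_N N (f m)"
      by auto
    define K where "K = 15 * Mp * Mf * sqrt (real N) * l2norm_N N (f m)"
    have K0: "K \<ge> 0" using Mp0 Mf0 by (simp add: K_def l2norm_N_def sum_nonneg)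
    have "(\<Sum>n\<in>?S. \<Sum>j\<in>{0..<N div 2 ^ n}.
          2 powr (- real n) *
          cmod (\<Sum>x\<in>{1..int N}. \<Sum>t\<in>{- int N..int N}.
              ext0 N (f 0) x * (\<Prod>i\<in>{1..k}. ext0 N (f i) (x + int i * t))
              * complex_of_real (\<psi> (real_of_int t / 2 ^ n))
              * complex_of_real (\<phi> (2 powr (- real n) * real_of_int x - real j))))
        \<le> (\<Sum>n\<in>?S. K)"
      unfolding K_def by (rule sum_mono) (rule per_n[OF Mp sp Mf sf bd m])
    also have "\<dots> = real (card ?S) * K" by simp
    also have "\<dots> \<le> 2 * ln A / ln 2 * K"
      by (rule mult_right_mono[OF card_S(2)[OF N A] K0])
    also have "\<dots> = 2 / ln 2 * (15 * Mp * Mf) * sqrt (real N) * ln A * Min ((\<lambda>i. l2norm_N N (f i)) ` {0..k})"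
      unfolding mL K_def by (simp add: field_simps)
    finally show "(\<Sum>n\<in>?S. \<Sum>j\<in>{0..<N div 2 ^ n}.
          2 powr (- real n) *
          cmod (\<Sum>x\<in>{1..int N}. \<Sum>t\<in>{- int N..int N}.
              ext0 N (f 0) x * (\<Prod>i\<in>{1..k}. ext0 N (f i) (x + int i * t))
              * complex_of_real (\<psi> (real_of_int t / 2 ^ n))
              * complex_of_real (\<phi> (2 powr (- real n) * real_of_int x - real j))))
        \<le> 2 / ln 2 * (15 * Mp * Mf) * sqrt (real N) * ln A * Min ((\<lambda>i. l2norm_N N (f i)) ` {0..k})" .
  qed
qed

end
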